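(* For every integer $n\ge 3$ and every $x>0$: (1) $$\left(\sum_{k=0}^{\infty}\frac{k+1}{(x+k)^{n+1}}\right)^2<\left(\sum_{k=0}^{\infty}\frac{k+1}{(x+k)^{n}}\right)\left(\sum_{k=0}^{\infty}\frac{k+1}{(x+k)^{n+2}}\right);$$ (2) $$\left(\sum_{k=0}^{\infty}\frac{k+1}{(x+k)^{n+1}}\right)^2>\frac{n^2-n-2}{n^2-n}\left(\sum_{k=0}^{\infty}\frac{k+1}{(x+k)^{n}}\right)\left(\sum_{k=0}^{\infty}\frac{k+1}{(x+k)^{n+2}}\right).$$ *)

theory Defs
  imports "HOL-Analysis.Analysis"
begin

end

theory Submission
  imports Defs "HOL-Probability.Distributions"
begin


lemma sinh_gt: fixes u :: real assumes "u > 0" shows "2*u < exp u - exp (-u)"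
proof -
  define f where "f = (\<lambda>v. exp v - exp (-v) - 2*(v::real))"
  have "f 0 < f u"
  proof (rule DERIV_pos_imp_increasing_open[OF assms])
    fix v :: real assume v: "0 < v" "v < u"
    have "exp v > 1" using v by simp
    hence "exp v + exp (-v) - 2 > 0"
    proof -
      assume w: "exp v > 1"
      have "exp v + exp (-v) - 2 = (exp v - 1)^2 / exp v"
        by (simp add: exp_minus field_simps power2_eq_square)
      also have "\<dots> > 0" using w by simp
      finally show ?thesis .
    qed
    moreover have "DERIV f v :> exp v + exp (-v) - 2"
      unfolding f_def by (auto intro!: derivative_eq_intros)
    ultimately show "\<exists>y. DERIV f v :> y \<and> y > 0" by blast
  next
    show "continuous_on {0..u} f" unfolding f_def by (intro continuous_intros)
  qed
  thus ?thesis by (simp add: f_def)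
qed

definition phi :: "real \<Rightarrow> real" where "phi t = 1 / (1 - exp (-t)) - 1 / t"

lemma phi_deriv_pos: fixes t :: real assumes "t > 0"
  shows "t^2 * exp (-t) < (1 - exp (-t))^2"
proof -
  let ?u = "t/2"
  have e: "exp t = exp ?u * exp ?u" "exp (-t) = exp (-?u) * exp (-?u)"
    by (simp_all flip: exp_add)
  have "t < exp ?u - exp (-?u)" using sinh_gt[of ?u] assms by simp
  hence "t^2 < (exp ?u - exp (-?u))^2" using assms by (intro power_strict_mono) auto
  hence "t^2 * (exp (-?u))^2 < (exp ?u - exp (-?u))^2 * (exp (-?u))^2"
    by (intro mult_strict_right_mono) auto
  also have "(exp ?u - exp (-?u))^2 * (exp (-?u))^2 = (1 - exp (-t))^2"
    by (simp add: e power2_eq_square exp_minus field_simps)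
  finally show ?thesis by (simp add: e power2_eq_square)
qed

lemma phi_mono: fixes s t :: real assumes "0 < s" "s < t" shows "phi s < phi t"
proof (rule DERIV_pos_imp_increasing[OF assms(2)])
  fix v assume v: "s \<le> v" "v \<le> t"
  hence v0: "v > 0" using assms by simp
  have ne: "1 - exp (-v) \<noteq> 0" using v0 by simp
  have pos: "1 - exp (-v) > 0" using v0 by simp
  have "DERIV phi v :> (- exp (-v) / (1 - exp (-v))^2 + 1 / v^2)"
    unfolding phi_def[abs_def] using ne v0
    by (auto intro!: derivative_eq_intros simp: power2_eq_square field_simps)
  moreover have "- exp (-v) / (1 - exp (-v))^2 + 1 / v^2 > 0"
    using phi_deriv_pos[OF v0] pos v0 by (simp add: field_simps)
  ultimately show "\<exists>y. DERIV phi v :> y \<and> y > 0" by blast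
qed



lemma geo2_sums: fixes z :: real assumes "norm z < 1"
  shows "(\<lambda>n. of_nat (Suc n) * of_nat (Suc (Suc n)) * z^n) sums (2/(1-z)^3)"
proof -
  have "(\<lambda>n. diffs (\<lambda>n. of_nat (Suc n)) n * z^n) sums (2/(1-z)^3)"
  proof (rule termdiffs_sums_strong[where K=1 and f="\<lambda>z. 1/(1-z)^2"])
    fix z :: real assume "norm z < 1"
    thus "(\<lambda>n. of_nat (Suc n) * z^n) sums (1/(1-z)^2)" by (rule geometric_deriv_sums)
  next
    have d: "1 - z \<noteq> 0" using assms by auto
    show "((\<lambda>z. 1/(1-z)^2) has_field_derivative 2/(1-z)^3) (at z)"
    proof (rule DERIV_cong)
      show "((\<lambda>z. 1/(1-z)^2) has_field_derivative (- (2 * (1-z) * (-1)) / ((1-z)^2)^2)) (at z)"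
        using d by (intro derivative_eq_intros refl) auto
      show "- (2 * (1-z) * (-1)) / ((1-z)^2)^2 = 2/(1-z)^3"
      proof -
        have "((1-z)^2)^2 = (1-z)^3 * (1-z)" by (simp add: eval_nat_numeral)
        moreover have "- (2 * (1-z) * (-1)) = 2 * (1-z)" by simp
        moreover have "(1-z)^3 \<noteq> 0" using d by simp
        ultimately show ?thesis using d by (simp only:) (simp add: divide_simps)
      qed
    qed
  qed (use assms in auto)
  thus ?thesis unfolding diffs_def by (simp add: mult_ac)
qed

definition F0 :: "real \<Rightarrow> real \<Rightarrow> real" where
  "F0 x t = exp (-x*t) / (1 - exp (-t))^2"
definition F1 :: "real \<Rightarrow> real \<Rightarrow> real" where
  "F1 x t = exp (-x*t) * (2/(1 - exp (-t))^3 + (x-2)/(1 - exp (-t))^2)"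

lemma exp_split: "exp (-(x + real k) * t) = exp (-x*t) * exp (-t) ^ k"
proof -
  have "exp (-x*t) * exp (-t) ^ k = exp (-x*t) * exp (real k * (-t))" by (simp only: exp_of_nat_mult)
  also have "\<dots> = exp (-x*t + real k * (-t))" by (simp only: exp_add)
  also have "-x*t + real k * (-t) = -(x + real k) * t" by (simp add: algebra_simps)
  finally show ?thesis by simp
qed

lemma F0_sums: assumes "t > 0"
  shows "(\<lambda>k. (real k + 1) * exp (-(x + real k) * t)) sums F0 x t"
proof -
  have n: "norm (exp (-t)) < 1" using assms by simp
  have L: "(\<lambda>k. exp (-x*t) * (of_nat (Suc k) * exp (-t)^k)) sums (exp (-x*t) * (1/(1-exp (-t))^2))"
    by (intro sums_mult geometric_deriv_sums n)
  have E: "(\<lambda>k. exp (-x*t) * (of_nat (Suc k) * exp (-t)^k)) = (\<lambda>k. (real k + 1) * exp (-(x + real k) * t))"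
    by (rule ext, simp only: exp_split, simp)
  have V: "exp (-x*t) * (1/(1-exp (-t))^2) = F0 x t" by (simp add: F0_def)
  show ?thesis using L unfolding E V .
qed

lemma F1_sums: assumes "t > 0"
  shows "(\<lambda>k. (real k + 1) * (x + real k) * exp (-(x + real k) * t)) sums F1 x t"
proof -
  have n: "norm (exp (-t)) < 1" using assms by simp
  have L: "(\<lambda>k. exp (-x*t) * (of_nat (Suc k) * of_nat (Suc (Suc k)) * exp (-t)^k + (x-2) * (of_nat (Suc k) * exp (-t)^k)))
     sums (exp (-x*t) * (2/(1-exp (-t))^3 + (x-2) * (1/(1-exp (-t))^2)))"
    by (rule sums_mult, rule sums_add[OF geo2_sums[OF n] sums_mult[OF geometric_deriv_sums[OF n]]])
  have E: "(\<lambda>k. exp (-x*t) * (of_nat (Suc k) * of_nat (Suc (Suc k)) * exp (-t)^k + (x-2) * (of_nat (Suc k) * exp (-t)^k)))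
     = (\<lambda>k. (real k + 1) * (x + real k) * exp (-(x + real k) * t))"
    by (rule ext, simp only: exp_split, simp add: algebra_simps)
  have V: "exp (-x*t) * (2/(1-exp (-t))^3 + (x-2) * (1/(1-exp (-t))^2)) = F1 x t" by (simp add: F1_def)
  show ?thesis using L unfolding E V .
qed



lemma mom_exp:
  fixes a :: real and j :: nat
  assumes a: "a > 0" and j: "j \<ge> 1"
  shows "(\<integral>\<^sup>+t. ennreal (if 0 < t then t^j * exp (-a*t) else 0) \<partial>lborel) = ennreal (fact j / a^(j+1))"
proof -
  have "(\<integral>\<^sup>+t. ennreal (erlang_density 0 a t * t^j) \<partial>lborel)
      = (\<integral>\<^sup>+t. ennreal a * ennreal (if 0 < t then t^j * exp (-a*t) else 0) \<partial>lborel)"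
  proof (rule nn_integral_cong)
    fix t :: real
    have "erlang_density 0 a t * t^j = a * (if 0 < t then t^j * exp (-a*t) else 0)"
      using j by (auto simp: erlang_density_def)
    thus "ennreal (erlang_density 0 a t * t^j) = ennreal a * ennreal (if 0 < t then t^j * exp (-a*t) else 0)"
      using a by (simp add: ennreal_mult[symmetric])
  qed
  also have "\<dots> = ennreal a * (\<integral>\<^sup>+t. ennreal (if 0 < t then t^j * exp (-a*t) else 0) \<partial>lborel)"
    by (rule nn_integral_cmult) measurable
  finally have 1: "ennreal a * (\<integral>\<^sup>+t. ennreal (if 0 < t then t^j * exp (-a*t) else 0) \<partial>lborel)
      = (\<integral>\<^sup>+t. ennreal (erlang_density 0 a t * t^j) \<partial>lborel)" ..
  also have "\<dots> = ennreal (fact j / a^j)"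
    using nn_integral_erlang_ith_moment[OF a, of 0 j] by simp
  finally have 2: "ennreal a * (\<integral>\<^sup>+t. ennreal (if 0 < t then t^j * exp (-a*t) else 0) \<partial>lborel) = ennreal (fact j / a^j)" .
  have "(\<integral>\<^sup>+t. ennreal (if 0 < t then t^j * exp (-a*t) else 0) \<partial>lborel)
      = ennreal (1/a) * (ennreal a * (\<integral>\<^sup>+t. ennreal (if 0 < t then t^j * exp (-a*t) else 0) \<partial>lborel))"
    using a by (simp add: mult.assoc[symmetric] ennreal_mult[symmetric])
  also have "\<dots> = ennreal (1/a) * ennreal (fact j / a^j)" by (simp only: 2)
  also have "\<dots> = ennreal (fact j / a^(j+1))"
    using a by (simp add: ennreal_mult[symmetric] field_simps)
  finally show ?thesis .
qed



lemma mom_series: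
  fixes c :: "nat \<Rightarrow> real" and F :: "real \<Rightarrow> real" and x :: real and j :: nat
  assumes x: "x > 0" and j: "j \<ge> 1" and c: "\<And>k. c k \<ge> 0"
    and sm: "\<And>t. t > 0 \<Longrightarrow> (\<lambda>k. c k * exp (-(x + real k) * t)) sums F t"
    and summ: "summable (\<lambda>k. c k * (fact j / (x + real k)^(j+1)))"
    and meas: "(\<lambda>t. if 0 < t then t^j * F t else 0) \<in> borel_measurable lborel"
  shows "integrable lborel (\<lambda>t. if 0 < t then t^j * F t else 0)
     \<and> integral\<^sup>L lborel (\<lambda>t. if 0 < t then t^j * F t else 0) = (\<Sum>k. c k * (fact j / (x + real k)^(j+1)))"
proof -
  have Fnn: "F t \<ge> 0" if "t > 0" for t
  proof -
    have "F t = (\<Sum>k. c k * exp (-(x + real k) * t))" using sums_unique[OF sm[OF that]] .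
    also have "\<dots> \<ge> 0" by (rule suminf_nonneg[OF sums_summable[OF sm[OF that]]]) (use c in simp)
    finally show ?thesis .
  qed
  have "(\<integral>\<^sup>+t. ennreal (if 0 < t then t^j * F t else 0) \<partial>lborel)
      = (\<integral>\<^sup>+t. (\<Sum>k. ennreal (c k * (if 0 < t then t^j * exp (-(x + real k)*t) else 0))) \<partial>lborel)"
  proof (rule nn_integral_cong)
    fix t :: real
    show "ennreal (if 0 < t then t^j * F t else 0) = (\<Sum>k. ennreal (c k * (if 0 < t then t^j * exp (-(x + real k)*t) else 0)))"
    proof (cases "t > 0")
      case True
      have "(\<lambda>k. t^j * (c k * exp (-(x + real k) * t))) sums (t^j * F t)"
        by (rule sums_mult[OF sm[OF True]])
      hence "(\<lambda>k. c k * (t^j * exp (-(x + real k) * t))) sums (t^j * F t)"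
        by (simp add: mult_ac)
      hence "(\<Sum>k. ennreal (c k * (t^j * exp (-(x + real k) * t)))) = ennreal (t^j * F t)"
        by (rule suminf_ennreal_eq[rotated]) (use c True in auto)
      thus ?thesis using True by simp
    qed simp
  qed
  also have "\<dots> = (\<Sum>k. \<integral>\<^sup>+t. ennreal (c k * (if 0 < t then t^j * exp (-(x + real k)*t) else 0)) \<partial>lborel)"
    by (rule nn_integral_suminf) measurable
  also have "\<dots> = (\<Sum>k. ennreal (c k * (fact j / (x + real k)^(j+1))))"
  proof (rule suminf_cong)
    fix k
    have xk: "x + real k > 0" using x by simp
    have "(\<integral>\<^sup>+t. ennreal (c k * (if 0 < t then t^j * exp (-(x + real k)*t) else 0)) \<partial>lborel)
        = (\<integral>\<^sup>+t. ennreal (c k) * ennreal (if 0 < t then t^j * exp (-(x + real k)*t) else 0) \<partial>lborel)"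
      by (rule nn_integral_cong) (use c in \<open>simp add: ennreal_mult[symmetric]\<close>)
    also have "\<dots> = ennreal (c k) * (\<integral>\<^sup>+t. ennreal (if 0 < t then t^j * exp (-(x + real k)*t) else 0) \<partial>lborel)"
      by (rule nn_integral_cmult) measurable
    also have "\<dots> = ennreal (c k) * ennreal (fact j / (x + real k)^(j+1))"
      using mom_exp[OF xk j] by simp
    also have "\<dots> = ennreal (c k * (fact j / (x + real k)^(j+1)))"
      using c xk by (simp add: ennreal_mult[symmetric])
    finally show "(\<integral>\<^sup>+t. ennreal (c k * (if 0 < t then t^j * exp (-(x + real k)*t) else 0)) \<partial>lborel)
        = ennreal (c k * (fact j / (x + real k)^(j+1)))" .
  qed
  also have "\<dots> = ennreal (\<Sum>k. c k * (fact j / (x + real k)^(j+1)))"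
    by (rule suminf_ennreal2[OF _ summ]) (use c x in simp)
  finally have eq: "(\<integral>\<^sup>+t. ennreal (if 0 < t then t^j * F t else 0) \<partial>lborel) = ennreal (\<Sum>k. c k * (fact j / (x + real k)^(j+1)))" .
  have nn: "0 \<le> (\<Sum>k. c k * (fact j / (x + real k)^(j+1)))"
    by (rule suminf_nonneg[OF summ]) (use c x in simp)
  show ?thesis
  proof -
    have AE: "AE t in lborel. 0 \<le> (if 0 < t then t^j * F t else 0)"
      by (rule AE_I2) (simp add: Fnn)
    show ?thesis using nn_integral_eq_integrable[OF meas AE nn] eq by blast
  qed
qed



definition SS :: "real \<Rightarrow> nat \<Rightarrow> real" where
  "SS x s = (\<Sum>k. (real k + 1) / (x + real k) ^ s)"

lemma S_summable:
  fixes x :: real assumes x: "x > 0" and s: "s \<ge> 3"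
  shows "summable (\<lambda>k. (real k + 1) / (x + real k) ^ s)"
proof (rule summable_comparison_test')
  show "summable (\<lambda>k. 2 * inverse (real k ^ 2))"
    by (intro summable_mult inverse_power_summable) simp
next
  fix k :: nat assume k: "k \<ge> 1"
  have k0: "real k \<ge> 1" using k by simp
  have "real k ^ 3 \<le> real k ^ s" by (rule power_increasing[OF s k0])
  also have "\<dots> \<le> (x + real k) ^ s" using x by (intro power_mono) auto
  finally have d: "real k ^ 3 \<le> (x + real k) ^ s" .
  have "(real k + 1) / (x + real k) ^ s \<le> (2 * real k) / (real k ^ 3)"
    by (rule frac_le) (use k0 d in auto)
  also have "\<dots> = 2 * inverse (real k ^ 2)" using k0 by (simp add: field_simps eval_nat_numeral)
  finally show "norm ((real k + 1) / (x + real k) ^ s) \<le> 2 * inverse (real k ^ 2)"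
    using x by simp
qed

lemma S_pos: assumes x: "x > 0" and s: "s \<ge> 3" shows "SS x s > 0"
  unfolding SS_def
  by (rule suminf_pos2[OF S_summable[OF x s], of 0]) (use x in auto)

lemma I_mom:
  assumes x: "x > 0" and j: "j \<ge> 2"
  shows "integrable lborel (\<lambda>t. if 0 < t then t^j * F0 x t else 0)
     \<and> integral\<^sup>L lborel (\<lambda>t. if 0 < t then t^j * F0 x t else 0) = fact j * SS x (j+1)"
proof -
  have summ: "summable (\<lambda>k. (real k + 1) * (fact j / (x + real k)^(j+1)))"
    using summable_mult[OF S_summable[OF x, of "j+1"], of "fact j"] j by (simp add: mult_ac)
  have meas: "(\<lambda>t. if 0 < t then t^j * F0 x t else 0) \<in> borel_measurable lborel"
    unfolding F0_def by measurable
  have "(\<Sum>k. (real k + 1) * (fact j / (x + real k)^(j+1))) = (\<Sum>k. fact j * ((real k + 1) / (x + real k)^(j+1)))"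
    by (simp add: mult_ac)
  also have "\<dots> = fact j * SS x (j+1)" unfolding SS_def
    by (rule suminf_mult) (use S_summable[OF x, of "j+1"] j in simp)
  finally show ?thesis
    using mom_series[of x j "\<lambda>k. real k + 1" "F0 x", OF x _ _ F0_sums summ meas] j by simp
qed

lemma J_mom:
  assumes x: "x > 0" and j: "j \<ge> 3"
  shows "integrable lborel (\<lambda>t. if 0 < t then t^j * F1 x t else 0)
     \<and> integral\<^sup>L lborel (\<lambda>t. if 0 < t then t^j * F1 x t else 0) = fact j * SS x j"
proof -
  have e: "\<And>k. (real k + 1) * (x + real k) * (fact j / (x + real k)^(j+1)) = fact j * ((real k + 1) / (x + real k)^j)"
  proof -
    fix k
    have xk: "x + real k \<noteq> 0" using x by simp
    have "(x + real k)^(j+1) = (x + real k)^j * (x + real k)" by simp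
    then show "(real k + 1) * (x + real k) * (fact j / (x + real k)^(j+1)) = fact j * ((real k + 1) / (x + real k)^j)"
    proof -
      have gen: "\<And>a y f::real. y \<noteq> 0 \<Longrightarrow> a * y * (f / (y^j * y)) = f * (a / y^j)"
        by (simp add: field_simps)
      show ?thesis using gen[OF xk] by simp
    qed
  qed
  have summ: "summable (\<lambda>k. (real k + 1) * (x + real k) * (fact j / (x + real k)^(j+1)))"
    unfolding e by (intro summable_mult S_summable[OF x j])
  have meas: "(\<lambda>t. if 0 < t then t^j * F1 x t else 0) \<in> borel_measurable lborel"
    unfolding F1_def by measurable
  have "(\<Sum>k. (real k + 1) * (x + real k) * (fact j / (x + real k)^(j+1))) = fact j * SS x j"
    unfolding e SS_def by (rule suminf_mult) (rule S_summable[OF x j])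
  thus ?thesis
    using mom_series[of x j "\<lambda>k. (real k + 1) * (x + real k)" "F1 x", OF x _ _ F1_sums summ meas] j x
    by simp
qed



lemma alg_ident:
  fixes t p F q r x \<tau> :: real
  assumes "t \<noteq> 0"
  shows "(t*t*p) * (F * (2*q + x - 2)) - 2 * ((t*p) * F) - (2*r + x - 2) * ((t*t*p) * F) - \<tau> * ((t*p) * (F * (2*q + x - 2)))
     + 2*\<tau>*(p * F) + (2*r + x - 2)*\<tau>*((t*p) * F) = 2 * (t - \<tau>) * ((t*p) * F) * ((q - 1/t) - r)"
  using assms by (simp add: field_simps)

lemma F1_F0: assumes "t > 0" shows "F1 x t = F0 x t * (2 * (1 / (1 - exp (-t))) + x - 2)"
proof -
  have "1 - exp (-t) \<noteq> 0" using assms by simp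
  moreover have "\<And>a e::real. a \<noteq> 0 \<Longrightarrow> e * (2/a^3 + (x-2)/a^2) = e / a^2 * (2 * (1/a) + x - 2)"
    by (simp add: field_simps power2_eq_square power3_eq_cube)
  ultimately show ?thesis unfolding F1_def F0_def by blast
qed

lemma F0_pos: assumes "t > 0" shows "F0 x t > 0"
  using assms unfolding F0_def by simp

lemma P_ident:
  assumes t: "t > 0" and nm: "n = Suc m"
  shows "t^(n+1) * F1 x t - 2 * (t^n * F0 x t) - (2*phi \<tau> + x - 2) * (t^(n+1) * F0 x t) - \<tau> * (t^n * F1 x t)
     + 2*\<tau>*(t^m * F0 x t) + (2*phi \<tau> + x - 2)*\<tau>*(t^n * F0 x t) = 2 * (t - \<tau>) * (t^n * F0 x t) * (phi t - phi \<tau>)"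
proof -
  have e1: "t^(n+1) = t*t*t^m" "t^n = t*t^m" using nm by simp_all
  have e2: "phi t = 1 / (1 - exp (-t)) - 1/t" by (simp add: phi_def)
  show ?thesis unfolding e1 e2 F1_F0[OF t]
    by (rule alg_ident) (use t in simp)
qed



lemma part2:
  fixes x :: real and n :: nat
  assumes x: "x > 0" and n: "n \<ge> 3"
  shows "(real n + 1) * (real n - 2) * (SS x n * SS x (n+2)) < real n * (real n - 1) * SS x (n+1)^2"
proof -
  obtain m where nm: "n = Suc m" and m: "m \<ge> 2" using n by (cases n) auto
  define b where "b j = (\<lambda>t. if 0 < t then t^j * F0 x t else 0)" for j
  define d where "d j = (\<lambda>t. if 0 < t then t^j * F1 x t else 0)" for j
  have hb: "has_bochner_integral lborel (b j) (fact j * SS x (j+1))" if "j \<ge> 2" for j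
    using I_mom[OF x that] unfolding b_def has_bochner_integral_iff by blast
  have hd: "has_bochner_integral lborel (d j) (fact j * SS x j)" if "j \<ge> 3" for j
    using J_mom[OF x that] unfolding d_def has_bochner_integral_iff by blast
  have S0: "SS x n > 0" by (rule S_pos[OF x n])
  have S1: "SS x (n+1) > 0" by (rule S_pos[OF x]) (use n in simp)
  have S2: "SS x (n+2) > 0" by (rule S_pos[OF x]) (use n in simp)
  define \<tau> where "\<tau> = (real n + 1) * SS x (n+2) / SS x (n+1)"
  have \<tau>: "\<tau> > 0" unfolding \<tau>_def using S1 S2 by simp
  define cc where "cc = 2 * phi \<tau> + x - 2"
  define P where "P t = d (n+1) t - 2 * b n t - cc * b (n+1) t - \<tau> * d n t + 2 * \<tau> * b m t + cc * \<tau> * b n t" for t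
  define V where "V = fact (n+1) * SS x (n+1) - 2 * (fact n * SS x (n+1)) - cc * (fact (n+1) * SS x (n+1+1))
      - \<tau> * (fact n * SS x n) + 2 * \<tau> * (fact m * SS x (m+1)) + cc * \<tau> * (fact n * SS x (n+1))"
  have hP: "has_bochner_integral lborel P V"
    unfolding P_def[abs_def] V_def
    by (intro has_bochner_integral_add has_bochner_integral_diff has_bochner_integral_mult_right hb hd)
       (use nm m in auto)
  have Pt: "P t = (if 0 < t then 2 * (t - \<tau>) * (t^n * F0 x t) * (phi t - phi \<tau>) else 0)" for t
  proof (cases "t > 0")
    case True
    show ?thesis using P_ident[OF True nm, of x \<tau>] True
      unfolding P_def b_def d_def cc_def by simp
  qed (simp add: P_def b_def d_def)
  define lo where "lo = 2 * ((\<tau>+1)^n * exp (-x*(\<tau>+2))) * (phi (\<tau>+1) - phi \<tau>)"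
  have lo: "lo > 0" unfolding lo_def using phi_mono[OF \<tau>, of "\<tau>+1"] \<tau> by simp
  have lowb: "lo * indicator {\<tau>+1..\<tau>+2} t \<le> P t" for t
  proof (cases "t \<in> {\<tau>+1..\<tau>+2}")
    case True
    hence t: "t > 0" "\<tau>+1 \<le> t" "t \<le> \<tau>+2" using \<tau> by auto
    have a1: "1 \<le> t - \<tau>" using t by simp
    have a2: "(\<tau>+1)^n \<le> t^n" using t \<tau> by (intro power_mono) auto
    have E: "0 < 1 - exp (-t)" "1 - exp (-t) \<le> 1" using t by auto
    have "(1 - exp (-t))^2 \<le> 1" using E by (simp add: power_le_one)
    hence "exp (-x*t) \<le> F0 x t" unfolding F0_def using E
      by (simp add: le_divide_eq)
    moreover have "exp (-x*(\<tau>+2)) \<le> exp (-x*t)" using t x by simp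
    ultimately have a3: "exp (-x*(\<tau>+2)) \<le> F0 x t" by linarith
    have a4: "phi (\<tau>+1) - phi \<tau> \<le> phi t - phi \<tau>"
      using phi_mono[of "\<tau>+1" t] t \<tau> by (cases "t = \<tau>+1") auto
    have p4: "0 \<le> phi (\<tau>+1) - phi \<tau>" using phi_mono[OF \<tau>, of "\<tau>+1"] by simp
    have AC: "(\<tau>+1)^n * exp (-x*(\<tau>+2)) \<le> t^n * F0 x t"
      by (rule mult_mono[OF a2 a3]) (use t in auto)
    have "2 * ((\<tau>+1)^n * exp (-x*(\<tau>+2))) * (phi (\<tau>+1) - phi \<tau>) \<le> 2 * (t^n * F0 x t) * (phi t - phi \<tau>)"
      by (rule mult_mono) (use AC a4 p4 F0_pos[OF t(1), of x] t in auto)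
    also have "\<dots> \<le> 2 * (t - \<tau>) * (t^n * F0 x t) * (phi t - phi \<tau>)"
    proof -
      have "0 \<le> 2 * (t^n * F0 x t) * (phi t - phi \<tau>)"
        using a4 p4 F0_pos[OF t(1), of x] t by simp
      hence h1: "1 * (2 * (t^n * F0 x t) * (phi t - phi \<tau>)) \<le> (t - \<tau>) * (2 * (t^n * F0 x t) * (phi t - phi \<tau>))"
        using a1 by (intro mult_right_mono) auto
      have eq: "2 * (t - \<tau>) * (t^n * F0 x t) * (phi t - phi \<tau>) = (t - \<tau>) * (2 * (t^n * F0 x t) * (phi t - phi \<tau>))"
        by (simp only: ac_simps)
      show ?thesis using h1 eq by (simp only: mult_1_left)
    qed
    finally show ?thesis using True t unfolding lo_def Pt by simp
  next
    case False
    have "0 \<le> P t"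
    proof (cases "t > 0")
      case True
      have "0 \<le> (t - \<tau>) * (phi t - phi \<tau>)"
      proof (cases t \<tau> rule: linorder_cases)
        case less thus ?thesis using phi_mono[OF True less] by (simp add: mult_nonpos_nonpos)
      next
        case greater thus ?thesis using phi_mono[OF \<tau> greater] by simp
      qed simp
      moreover have "0 \<le> t^n * F0 x t" using F0_pos[OF True, of x] True by simp
      ultimately have nn: "0 \<le> 2 * ((t^n * F0 x t) * ((t - \<tau>) * (phi t - phi \<tau>)))" by simp
      have eq: "2 * (t - \<tau>) * (t^n * F0 x t) * (phi t - phi \<tau>) = 2 * ((t^n * F0 x t) * ((t - \<tau>) * (phi t - phi \<tau>)))"
        by (simp only: ac_simps)
      have "P t = 2 * (t - \<tau>) * (t^n * F0 x t) * (phi t - phi \<tau>)" using Pt[of t] True by simp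
      thus ?thesis using nn eq by (simp only:)
    qed (simp add: Pt)
    thus ?thesis using False by simp
  qed
  have hlo: "has_bochner_integral lborel (\<lambda>t. lo * indicator {\<tau>+1..\<tau>+2} t) (lo * measure lborel {\<tau>+1..\<tau>+2})"
    by (rule has_bochner_integral_mult_right, rule has_bochner_integral_real_indicator) auto
  have "integral\<^sup>L lborel (\<lambda>t. lo * indicator {\<tau>+1..\<tau>+2} t) \<le> integral\<^sup>L lborel P"
    by (rule integral_mono[OF integrable.intros[OF hlo] integrable.intros[OF hP] lowb])
  hence "lo * measure lborel {\<tau>+1..\<tau>+2} \<le> V"
    by (simp only: has_bochner_integral_integral_eq[OF hlo] has_bochner_integral_integral_eq[OF hP])
  hence Vp: "V > 0" using lo by simp
  have tS: "\<tau> * SS x (n+1) = (real n + 1) * SS x (n+2)" using S1 by (simp add: \<tau>_def)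
  have f1: "(fact (n+1) :: real) = (real n + 1) * (real n * fact m)" using nm by (simp add: algebra_simps)
  have f2: "(fact n :: real) = real n * fact m" using nm by simp
  have e3: "SS x (n+1+1) = SS x (n+2)" "SS x (m+1) = SS x n" using nm by (simp_all add: numeral_2_eq_2)
  define fm where "fm = (fact m :: real)"
  define nn where "nn = real n"
  define A0 where "A0 = SS x n"
  define A1 where "A1 = SS x (n+1)"
  define A2 where "A2 = SS x (n+2)"
  have tS': "\<tau> * A1 = (nn + 1) * A2" using tS unfolding A1_def A2_def nn_def .
  have "V = (nn+1)*(nn*fm)*A1 - 2*(nn*fm*A1) - cc*((nn+1)*(nn*fm)*A2) - \<tau>*(nn*fm*A0) + 2*\<tau>*(fm*A0) + cc*\<tau>*(nn*fm*A1)"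
    unfolding V_def f1 f2 e3 fm_def nn_def A0_def A1_def A2_def by simp
  also have "cc*\<tau>*(nn*fm*A1) = cc*((nn+1)*(nn*fm)*A2)"
    using tS' by (metis mult.assoc mult.left_commute)
  finally have "V = fm * (nn*(nn-1)*A1 - \<tau>*(nn-2)*A0)"
    by (simp add: algebra_simps)
  moreover have "fm > 0" unfolding fm_def by simp
  ultimately have "nn*(nn-1)*A1 - \<tau>*(nn-2)*A0 > 0" using Vp by (simp add: zero_less_mult_iff)
  hence "(nn*(nn-1)*A1 - \<tau>*(nn-2)*A0) * A1 > 0" using S1 unfolding A1_def by simp
  hence "nn*(nn-1)*A1^2 - (\<tau>*A1)*(nn-2)*A0 > 0" by (simp add: algebra_simps power2_eq_square)
  hence "nn*(nn-1)*A1^2 - (nn + 1) * A2 *(nn-2)*A0 > 0" unfolding tS' .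
  thus ?thesis unfolding nn_def A0_def A1_def A2_def by (simp add: algebra_simps)
qed



lemma part1:
  fixes x :: real and n :: nat
  assumes x: "x > 0" and n: "n \<ge> 3"
  shows "SS x (n+1)^2 < SS x n * SS x (n+2)"
proof -
  define A0 where "A0 = SS x n"
  define A1 where "A1 = SS x (n+1)"
  define A2 where "A2 = SS x (n+2)"
  have P0: "A0 > 0" unfolding A0_def by (rule S_pos[OF x n])
  define \<mu> where "\<mu> = A1 / A0"
  define w where "w k = (real k + 1) / (x + real k)^n * (1/(x + real k) - \<mu>)^2" for k
  have s0: "(\<lambda>k. (real k + 1) / (x + real k)^n) sums A0"
    unfolding A0_def SS_def by (rule summable_sums[OF S_summable[OF x n]])
  have s1: "(\<lambda>k. (real k + 1) / (x + real k)^(n+1)) sums A1"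
    unfolding A1_def SS_def by (rule summable_sums[OF S_summable[OF x]]) (use n in simp)
  have s2: "(\<lambda>k. (real k + 1) / (x + real k)^(n+2)) sums A2"
    unfolding A2_def SS_def by (rule summable_sums[OF S_summable[OF x]]) (use n in simp)
  have sw0: "(\<lambda>k. (real k + 1) / (x + real k)^(n+2) - 2*\<mu> * ((real k + 1) / (x + real k)^(n+1)) + \<mu>^2 * ((real k + 1) / (x + real k)^n))
      sums (A2 - 2*\<mu>*A1 + \<mu>^2*A0)"
    by (intro sums_add sums_diff sums_mult s0 s1 s2)
  have weq: "w k = (real k + 1) / (x + real k)^(n+2) - 2*\<mu> * ((real k + 1) / (x + real k)^(n+1)) + \<mu>^2 * ((real k + 1) / (x + real k)^n)" for k
  proof -
    have xk: "x + real k \<noteq> 0" using x by simp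
    have gen: "\<And>y a. y \<noteq> 0 \<Longrightarrow> a / y^n * (1/y - \<mu>)^2 = a / (y^n*y*y) - 2*\<mu> * (a / (y^n*y)) + \<mu>^2 * (a / y^n)"
      by (simp add: field_simps power2_eq_square)
    show ?thesis unfolding w_def using gen[OF xk] by (simp add: power_add eval_nat_numeral mult_ac)
  qed
  have sw: "w sums (A2 - 2*\<mu>*A1 + \<mu>^2*A0)" using sw0 unfolding weq[abs_def] .
  have wnn: "w k \<ge> 0" for k unfolding w_def using x by simp
  have "\<exists>i. w i > 0"
  proof (rule ccontr)
    assume "\<not> ?thesis"
    hence "w 0 = 0" "w 1 = 0" using wnn by (metis less_eq_real_def)+
    hence "1/x = \<mu>" "1/(x+1) = \<mu>" unfolding w_def using x by simp_all
    hence "1/x = 1/(x+1)" by simp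
    thus False using x by (simp add: field_simps)
  qed
  then obtain i where "w i > 0" by blast
  hence pos: "A2 - 2*\<mu>*A1 + \<mu>^2*A0 > 0"
    using suminf_pos2[OF sums_summable[OF sw] wnn] sums_unique[OF sw] by metis
  have "A2 - 2*\<mu>*A1 + \<mu>^2*A0 = (A0 * A2 - A1^2) / A0"
    unfolding \<mu>_def using P0 by (simp add: field_simps power2_eq_square)
  hence "A0 * A2 - A1^2 > 0" using pos P0 by (simp add: zero_less_divide_iff)
  thus ?thesis unfolding A0_def A1_def A2_def by simp
qed


theorem corollary3p4:
  fixes n :: nat and x :: real
  assumes "n \<ge> 3" and "x > 0"
  shows "(\<Sum>k. (real k + 1) / (x + real k) ^ (n + 1)) ^ 2
           < (\<Sum>k. (real k + 1) / (x + real k) ^ n) * (\<Sum>k. (real k + 1) / (x + real k) ^ (n + 2))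
         \<and> (\<Sum>k. (real k + 1) / (x + real k) ^ (n + 1)) ^ 2
           > (real n ^ 2 - real n - 2) / (real n ^ 2 - real n) *
             ((\<Sum>k. (real k + 1) / (x + real k) ^ n) * (\<Sum>k. (real k + 1) / (x + real k) ^ (n + 2)))"
  proof -
  have e: "\<And>s. (\<Sum>k. (real k + 1) / (x + real k) ^ s) = SS x s" by (simp add: SS_def)
  have p1: "SS x (n+1)^2 < SS x n * SS x (n+2)" by (rule part1[OF assms(2,1)])
  have p2: "(real n + 1) * (real n - 2) * (SS x n * SS x (n+2)) < real n * (real n - 1) * SS x (n+1)^2"
    by (rule part2[OF assms(2,1)])
  have nn: "real n ^ 2 - real n > 0" using assms(1)
    by (simp add: power2_eq_square)
  have "(real n ^ 2 - real n - 2) * (SS x n * SS x (n+2)) < (real n ^ 2 - real n) * SS x (n+1)^2"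
    using p2 by (simp add: algebra_simps power2_eq_square)
  hence p2': "(real n ^ 2 - real n - 2) / (real n ^ 2 - real n) * (SS x n * SS x (n+2)) < SS x (n+1)^2"
    using nn by (simp add: pos_divide_less_eq mult.commute mult.left_commute)
  show ?thesis unfolding e using p1 p2' by simp
qed

end
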